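(* For $n\ge2$, the subgroup $\langle\rho_1,\dots,\rho_{n-1}\rangle$ of $TVB_n$ is isomorphic to $S_n$ (via $\rho_i\mapsto(i,i+1)$), and $TVB_n$ is the internal semidirect product $TVB_n=TVP_n\rtimes\langle\rho_1,\dots,\rho_{n-1}\rangle$, where the action on $TVP_n$ by conjugation is given by permutation of indices: for $a\in\langle\rho_1,\dots,\rho_{n-1}\rangle$ with image $\bar a\in S_n$, $a^{-1}\lambda_{ij}a=\lambda_{(i)\bar a,(j)\bar a}$ and $a^{-1}\gamma_i a=\gamma_{(i)\bar a}$.
   Context: For $n\ge 2$, the twisted virtual braid group $TVB_n$ is the group with generators $\sigma_1,\dots,\sigma_{n-1}$, $\rho_1,\dots,\rho_{n-1}$, $\gamma_1,\dots,\gamma_n$ and defining relations: $\sigma_i\sigma_{i+1}\sigma_i=\sigma_{i+1}\sigma_i\sigma_{i+1}$ ($1\le i\le n-2$); $\sigma_i\sigma_j=\sigma_j\sigma_i$ ($|i-j|\ge 2$); $\rho_i^2=1$; $\rho_i\rho_j=\rho_j\rho_i$ ($|i-j|\ge2$); $\rho_i\rho_{i+1}\rho_i=\rho_{i+1}\rho_i\rho_{i+1}$ ($1\le i\le n-2$); $\sigma_i\rho_j=\rho_j\sigma_i$ ($|i-j|\ge 2$); $\rho_i\rho_{i+1}\sigma_i=\sigma_{i+1}\rho_i\rho_{i+1}$ ($1\le i\le n-2$); $\gamma_i^2=1$ and $\gamma_i\gamma_j=\gamma_j\gamma_i$ (all $i,j$); $\gamma_j\rho_i=\rho_i\gamma_j$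 and $\gamma_j\sigma_i=\sigma_i\gamma_j$ for $j\notin\{i,i+1\}$; $\rho_i\gamma_i=\gamma_{i+1}\rho_i$ ($1\le i\le n-1$); $\rho_i\sigma_i\rho_i=\gamma_{i+1}\gamma_i\sigma_i\gamma_i\gamma_{i+1}$ ($1\le i\le n-1$). $\varphi_P:TVB_n\to S_n$ is the homomorphism with $\sigma_i\mapsto(i,i+1)$, $\rho_i\mapsto(i,i+1)$, $\gamma_j\mapsto e$, and $TVP_n=\ker\varphi_P$. In $TVB_n$ define $\lambda_{i,i+1}=\rho_i\sigma_i^{-1}$, $\lambda_{i+1,i}=\rho_i\lambda_{i,i+1}\rho_i$ ($1\le i\le n-1$), and for $1\le i<j-1\le n-1$: $\lambda_{ij}=\rho_{j-1}\cdots\rho_{i+1}\lambda_{i,i+1}\rho_{i+1}\cdots\rho_{j-1}$, $\lambda_{ji}=\rho_{j-1}\cdots\rho_{i+1}\lambda_{i+1,i}\rho_{i+1}\cdots\rho_{j-1}$. Permutations act on the right, $(k)\bar a$ being the image of $k$. *)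

theory Defs
  imports "HOL-Algebra.Algebra" "HOL-Combinatorics.Transposition" "HOL-Combinatorics.Permutations"
begin

datatype gen = Sg nat | Rg nat | Gg nat

text \<open>A letter is (flag, generator); flag True means the inverse of the generator.\<close>
type_synonym word = "(bool \<times> gen) list"

fun valid_gen :: "nat \<Rightarrow> gen \<Rightarrow> bool" where
  "valid_gen n (Sg i) = (1 \<le> i \<and> i \<le> n - 1)"
| "valid_gen n (Rg i) = (1 \<le> i \<and> i \<le> n - 1)"
| "valid_gen n (Gg j) = (1 \<le> j \<and> j \<le> n)"

definition words :: "nat \<Rightarrow> word set" where
  "words n = {w. \<forall>x\<in>set w. valid_gen n (snd x)}"

definition inv_word :: "word \<Rightarrow> word" where
  "inv_word w = rev (map (\<lambda>(b, x). (\<not> b, x)) w)"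

abbreviation sw :: "nat \<Rightarrow> word" where "sw i \<equiv> [(False, Sg i)]"
abbreviation rw :: "nat \<Rightarrow> word" where "rw i \<equiv> [(False, Rg i)]"
abbreviation gw :: "nat \<Rightarrow> word" where "gw i \<equiv> [(False, Gg i)]"

definition rels :: "nat \<Rightarrow> (word \<times> word) set" where
  "rels n =
     {(sw i @ sw (i+1) @ sw i, sw (i+1) @ sw i @ sw (i+1)) | i. 1 \<le> i \<and> i \<le> n - 2}
   \<union> {(sw i @ sw j, sw j @ sw i) | i j. 1 \<le> i \<and> i \<le> n - 1 \<and> 1 \<le> j \<and> j \<le> n - 1 \<and> (i + 2 \<le> j \<or> j + 2 \<le> i)}
   \<union> {(rw i @ rw i, []) | i. 1 \<le> i \<and> i \<le> n - 1}
   \<union> {(rw i @ rw j, rw j @ rw i) | i j. 1 \<le> i \<and> i \<le> n - 1 \<and> 1 \<le> j \<and> j \<le> n - 1 \<and> (i + 2 \<le> j \<or> j + 2 \<le> i)}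
   \<union> {(rw i @ rw (i+1) @ rw i, rw (i+1) @ rw i @ rw (i+1)) | i. 1 \<le> i \<and> i \<le> n - 2}
   \<union> {(sw i @ rw j, rw j @ sw i) | i j. 1 \<le> i \<and> i \<le> n - 1 \<and> 1 \<le> j \<and> j \<le> n - 1 \<and> (i + 2 \<le> j \<or> j + 2 \<le> i)}
   \<union> {(rw i @ rw (i+1) @ sw i, sw (i+1) @ rw i @ rw (i+1)) | i. 1 \<le> i \<and> i \<le> n - 2}
   \<union> {(gw i @ gw i, []) | i. 1 \<le> i \<and> i \<le> n}
   \<union> {(gw i @ gw j, gw j @ gw i) | i j. 1 \<le> i \<and> i \<le> n \<and> 1 \<le> j \<and> j \<le> n}
   \<union> {(gw j @ rw i, rw i @ gw j) | i j. 1 \<le> i \<and> i \<le> n - 1 \<and> 1 \<le> j \<and> j \<le> n \<and> j \<noteq> i \<and> j \<noteq> i + 1}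
   \<union> {(gw j @ sw i, sw i @ gw j) | i j. 1 \<le> i \<and> i \<le> n - 1 \<and> 1 \<le> j \<and> j \<le> n \<and> j \<noteq> i \<and> j \<noteq> i + 1}
   \<union> {(rw i @ gw i, gw (i+1) @ rw i) | i. 1 \<le> i \<and> i \<le> n - 1}
   \<union> {(rw i @ sw i @ rw i, gw (i+1) @ gw i @ sw i @ gw i @ gw (i+1)) | i. 1 \<le> i \<and> i \<le> n - 1}"

inductive eqv :: "nat \<Rightarrow> word \<Rightarrow> word \<Rightarrow> bool" for n where
  refl: "w \<in> words n \<Longrightarrow> eqv n w w"
| sym: "eqv n u v \<Longrightarrow> eqv n v u"
| trans: "eqv n u v \<Longrightarrow> eqv n v w \<Longrightarrow> eqv n u w"
| cancel: "u \<in> words n \<Longrightarrow> v \<in> words n \<Longrightarrow> valid_gen n x \<Longrightarrow>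
           eqv n (u @ [(b, x), (\<not> b, x)] @ v) (u @ v)"
| rel: "(l, r) \<in> rels n \<Longrightarrow> u \<in> words n \<Longrightarrow> v \<in> words n \<Longrightarrow>
        eqv n (u @ l @ v) (u @ r @ v)"

definition eqrel :: "nat \<Rightarrow> (word \<times> word) set" where
  "eqrel n = {(u, v). eqv n u v}"

definition cls :: "nat \<Rightarrow> word \<Rightarrow> word set" where
  "cls n w = eqrel n `` {w}"

definition tvb_mult :: "nat \<Rightarrow> word set \<Rightarrow> word set \<Rightarrow> word set" where
  "tvb_mult n A B = cls n ((SOME a. a \<in> A) @ (SOME b. b \<in> B))"

definition TVB :: "nat \<Rightarrow> word set monoid" where
  "TVB n = \<lparr> carrier = words n // eqrel n, monoid.mult = tvb_mult n, monoid.one = cls n [] \<rparr>"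

definition sigma :: "nat \<Rightarrow> nat \<Rightarrow> word set" where "sigma n i = cls n (sw i)"
definition rho :: "nat \<Rightarrow> nat \<Rightarrow> word set" where "rho n i = cls n (rw i)"
definition gamma :: "nat \<Rightarrow> nat \<Rightarrow> word set" where "gamma n j = cls n (gw j)"

definition lamw :: "nat \<Rightarrow> nat \<Rightarrow> word" where
  "lamw i j =
     (if j = i + 1 then rw i @ [(True, Sg i)]
      else if i = j + 1 then rw j @ (rw j @ [(True, Sg j)]) @ rw j
      else if i + 1 < j then
        map (\<lambda>k. (False, Rg k)) (rev [i+1..<j]) @ (rw i @ [(True, Sg i)])
          @ map (\<lambda>k. (False, Rg k)) [i+1..<j]
      else if j + 1 < i then
        map (\<lambda>k. (False, Rg k)) (rev [j+1..<i]) @ (rw j @ (rw j @ [(True, Sg j)]) @ rw j)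
          @ map (\<lambda>k. (False, Rg k)) [j+1..<i]
      else [])"

definition lambda :: "nat \<Rightarrow> nat \<Rightarrow> nat \<Rightarrow> word set" where
  "lambda n i j = cls n (lamw i j)"

text \<open>(k)(p q) = ((k)p)q, i.e. the product p q is the function q \<circ> p.\<close>
definition Sym :: "nat \<Rightarrow> (nat \<Rightarrow> nat) monoid" where
  "Sym n = \<lparr> carrier = {p. p permutes {1..n}}, monoid.mult = (\<lambda>p q. q \<circ> p), monoid.one = id \<rparr>"

fun gen_img :: "gen \<Rightarrow> nat \<Rightarrow> nat" where
  "gen_img (Sg i) = transpose i (i + 1)"
| "gen_img (Rg i) = transpose i (i + 1)"
| "gen_img (Gg j) = id"

text \<open>Image of x_1 x_2 ... x_m in Sym n is x_m \<circ> ... \<circ> x_1 (all images are involutions or id).\<close>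
definition phiw :: "word \<Rightarrow> nat \<Rightarrow> nat" where
  "phiw w = fold (\<lambda>x acc. gen_img (snd x) \<circ> acc) w id"

definition phiP :: "nat \<Rightarrow> word set \<Rightarrow> nat \<Rightarrow> nat" where
  "phiP n A = phiw (SOME w. w \<in> A)"

definition TVP :: "nat \<Rightarrow> word set set" where
  "TVP n = kernel (TVB n) (Sym n) (phiP n)"

definition RhoSub :: "nat \<Rightarrow> word set set" where
  "RhoSub n = generate (TVB n) {rho n i | i. 1 \<le> i \<and> i \<le> n - 1}"

end

theory Submission
  imports Defs
begin


lemma words_append[simp]: "(u @ v \<in> words n) = (u \<in> words n \<and> v \<in> words n)"
  by (auto simp: words_def)
lemma words_Cons[simp]: "(x # v \<in> words n) = (valid_gen n (snd x) \<and> v \<in> words n)"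
  by (auto simp: words_def)
lemma words_Nil[simp]: "[] \<in> words n"
  by (auto simp: words_def)

lemma rels_words: "(l, r) \<in> rels n \<Longrightarrow> l \<in> words n \<and> r \<in> words n"
  unfolding rels_def by auto

lemma eqv_words: "eqv n u v \<Longrightarrow> u \<in> words n \<and> v \<in> words n"
  by (induction rule: eqv.induct) (auto dest: rels_words)

lemma eqv_ctx: "eqv n u v \<Longrightarrow> x \<in> words n \<Longrightarrow> y \<in> words n \<Longrightarrow> eqv n (x @ u @ y) (x @ v @ y)"
proof (induction rule: eqv.induct)
  case (refl w) then show ?case by (intro eqv.refl) simp
next
  case (sym u v) then show ?case by (blast intro: eqv.sym)
next
  case (trans u v w) then show ?case by (blast intro: eqv.trans)
next
  case (cancel u v x' b)
  then show ?case using eqv.cancel[of "x @ u" n "v @ y" x' b] by simp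
next
  case (rel l r u v)
  then show ?case using eqv.rel[of l r n "x @ u" "v @ y"] by simp
qed

lemma eqv_app: "eqv n u u' \<Longrightarrow> eqv n v v' \<Longrightarrow> eqv n (u @ v) (u' @ v')"
proof -
  assume a: "eqv n u u'" "eqv n v v'"
  have "eqv n ([] @ u @ v) ([] @ u' @ v)" using eqv_ctx[OF a(1), of "[]" v] eqv_words[OF a(2)] by simp
  moreover have "eqv n (u' @ v @ []) (u' @ v' @ [])" using eqv_ctx[OF a(2), of u' "[]"] eqv_words[OF a(1)] by simp
  ultimately show ?thesis by (auto intro: eqv.trans)
qed

lemma cls_mem: "w \<in> cls n u \<longleftrightarrow> eqv n u w"
  by (simp add: cls_def eqrel_def)

lemma cls_eqI: "eqv n u v \<Longrightarrow> cls n u = cls n v"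
  unfolding cls_mem set_eq_iff cls_def eqrel_def by (auto intro: eqv.trans eqv.sym)

lemma cls_eq_iff: "u \<in> words n \<Longrightarrow> cls n u = cls n v \<longleftrightarrow> eqv n u v"
proof
  assume u: "u \<in> words n" and e: "cls n u = cls n v"
  have "u \<in> cls n u" using u by (simp add: cls_mem eqv.refl)
  then have "eqv n v u" using e by (simp add: cls_mem)
  then show "eqv n u v" by (rule eqv.sym)
qed (rule cls_eqI)

lemma carrier_TVB: "carrier (TVB n) = cls n ` words n"
  by (auto simp: TVB_def quotient_def cls_def)

lemma some_cls: "u \<in> words n \<Longrightarrow> eqv n u (SOME a. a \<in> cls n u)"
proof -
  assume u: "u \<in> words n"
  have "u \<in> cls n u" using u by (simp add: cls_mem eqv.refl)
  then have "(SOME a. a \<in> cls n u) \<in> cls n u" by (rule someI)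
  then show ?thesis by (simp add: cls_mem)
qed

lemma mult_cls: "u \<in> words n \<Longrightarrow> v \<in> words n \<Longrightarrow> cls n u \<otimes>\<^bsub>TVB n\<^esub> cls n v = cls n (u @ v)"
  unfolding TVB_def tvb_mult_def
  by (simp, rule cls_eqI, rule eqv.sym, rule eqv_app; rule some_cls)

lemma one_TVB: "\<one>\<^bsub>TVB n\<^esub> = cls n []" by (simp add: TVB_def)

lemma inv_word_Cons: "inv_word (x # w) = inv_word w @ [(\<not> fst x, snd x)]"
  by (cases x) (simp add: inv_word_def)
lemma inv_word_Nil[simp]: "inv_word [] = []" by (simp add: inv_word_def)
lemma inv_word_append: "inv_word (u @ v) = inv_word v @ inv_word u"
  by (simp add: inv_word_def)

lemma inv_word_words: "w \<in> words n \<Longrightarrow> inv_word w \<in> words n"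
  by (induction w) (auto simp: inv_word_Cons)

lemma eqv_inv_cancel: "w \<in> words n \<Longrightarrow> eqv n (inv_word w @ w) []"
proof (induction w)
  case Nil then show ?case by (simp add: eqv.refl)
next
  case (Cons x w)
  obtain b g where x: "x = (b, g)" by (cases x)
  have "eqv n (inv_word w @ [(\<not> b, g), (\<not> \<not> b, g)] @ w) (inv_word w @ w)"
    using Cons x by (intro eqv.cancel) (auto intro: inv_word_words)
  then have "eqv n (inv_word (x # w) @ x # w) (inv_word w @ w)"
    by (simp add: x inv_word_Cons)
  then show ?case using Cons by (auto intro: eqv.trans)
qed

lemma TVB_group: "group (TVB n)"
proof (rule groupI)
  fix x y assume "x \<in> carrier (TVB n)" "y \<in> carrier (TVB n)"
  then show "x \<otimes>\<^bsub>TVB n\<^esub> y \<in> carrier (TVB n)"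
    by (auto simp: carrier_TVB mult_cls)
next
  show "\<one>\<^bsub>TVB n\<^esub> \<in> carrier (TVB n)" by (simp add: carrier_TVB one_TVB)
next
  fix x y z assume "x \<in> carrier (TVB n)" "y \<in> carrier (TVB n)" "z \<in> carrier (TVB n)"
  then show "x \<otimes>\<^bsub>TVB n\<^esub> y \<otimes>\<^bsub>TVB n\<^esub> z = x \<otimes>\<^bsub>TVB n\<^esub> (y \<otimes>\<^bsub>TVB n\<^esub> z)"
    by (auto simp: carrier_TVB mult_cls)
next
  fix x assume "x \<in> carrier (TVB n)"
  then show "\<one>\<^bsub>TVB n\<^esub> \<otimes>\<^bsub>TVB n\<^esub> x = x"
    by (auto simp: carrier_TVB mult_cls one_TVB)
next
  fix x assume "x \<in> carrier (TVB n)"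
  then obtain w where w: "w \<in> words n" "x = cls n w" by (auto simp: carrier_TVB)
  have "cls n (inv_word w) \<otimes>\<^bsub>TVB n\<^esub> x = \<one>\<^bsub>TVB n\<^esub>"
    using w by (simp add: mult_cls inv_word_words one_TVB cls_eqI eqv_inv_cancel)
  moreover have "cls n (inv_word w) \<in> carrier (TVB n)" using w by (simp add: carrier_TVB inv_word_words)
  ultimately show "\<exists>y\<in>carrier (TVB n). y \<otimes>\<^bsub>TVB n\<^esub> x = \<one>\<^bsub>TVB n\<^esub>" by blast
qed

lemma inv_cls: "w \<in> words n \<Longrightarrow> inv\<^bsub>TVB n\<^esub> (cls n w) = cls n (inv_word w)"
proof -
  assume w: "w \<in> words n"
  interpret G: group "TVB n" by (rule TVB_group)
  show ?thesis
    by (rule G.inv_equality) (use w in \<open>simp_all add: mult_cls inv_word_words one_TVB cls_eqI eqv_inv_cancel carrier_TVB\<close>)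
qed



lemma phiw_fold_gen: "fold (\<lambda>x acc. gen_img (snd x) \<circ> acc) v (s::nat\<Rightarrow>nat) = phiw v \<circ> s"
  unfolding phiw_def
proof (induction v arbitrary: s)
  case Nil then show ?case by simp
next
  case (Cons a v)
  show ?case using Cons[of "gen_img (snd a) \<circ> s"] Cons[of "gen_img (snd a)"] by (simp add: comp_assoc)
qed

lemma phiw_append: "phiw (u @ v) = phiw v \<circ> phiw u"
  using phiw_fold_gen[of v "phiw u"] by (simp add: phiw_def)

lemma phiw_Nil[simp]: "phiw [] = id" by (simp add: phiw_def)
lemma phiw_single[simp]: "phiw [x] = gen_img (snd x)" by (simp add: phiw_def)
lemma phiw_Cons: "phiw (x # v) = phiw v \<circ> gen_img (snd x)"
  using phiw_append[of "[x]" v] by simp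

lemma gen_img_inv[simp]: "gen_img g \<circ> gen_img g = id"
  by (cases g) auto

lemma tr_braid: "transpose i (Suc i) \<circ> (transpose (Suc i) (Suc (Suc i)) \<circ> transpose i (Suc i))
   = transpose (Suc i) (Suc (Suc i)) \<circ> (transpose i (Suc i) \<circ> transpose (Suc i) (Suc (Suc i)))"
  by (auto simp: fun_eq_iff transpose_def)

lemma tr_comm: "i + 2 \<le> j \<or> j + 2 \<le> i \<Longrightarrow> transpose i (Suc i) \<circ> transpose j (Suc j) = transpose j (Suc j) \<circ> transpose i (Suc i)"
  by (auto simp: fun_eq_iff transpose_def)

lemma phiw_rels: "(l, r) \<in> rels n \<Longrightarrow> phiw l = phiw r"
  unfolding rels_def
  by (auto simp: phiw_Cons tr_braid tr_comm comp_assoc[symmetric] fun_eq_iff transpose_def)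

lemma phiw_eqv: "eqv n u v \<Longrightarrow> phiw u = phiw v"
proof (induction rule: eqv.induct)
  case (cancel u v x b)
  then show ?case by (simp add: phiw_append phiw_Cons comp_assoc)
next
  case (rel l r u v)
  then show ?case using phiw_rels[OF rel(1)] by (simp add: phiw_append)
qed auto

lemma phiP_cls: "w \<in> words n \<Longrightarrow> phiP n (cls n w) = phiw w"
  unfolding phiP_def using some_cls[of w n] phiw_eqv by metis

lemma gen_img_permutes: "valid_gen n g \<Longrightarrow> gen_img g permutes {1..n}"
  by (cases g) (auto intro: permutes_swap_id simp: permutes_id)

lemma phiw_permutes: "w \<in> words n \<Longrightarrow> phiw w permutes {1..n}"
proof (induction w)
  case (Cons a w)
  then show ?case unfolding phiw_Cons by (intro permutes_compose[OF gen_img_permutes]) auto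
qed (simp add: permutes_id)

lemma Sym_group: "group (Sym n)"
proof (rule groupI)
  fix x assume x: "x \<in> carrier (Sym n)"
  then have "inv_into UNIV x \<in> carrier (Sym n)" "inv_into UNIV x \<otimes>\<^bsub>Sym n\<^esub> x = \<one>\<^bsub>Sym n\<^esub>"
    by (auto simp: Sym_def permutes_inv permutes_inv_o)
  then show "\<exists>y\<in>carrier (Sym n). y \<otimes>\<^bsub>Sym n\<^esub> x = \<one>\<^bsub>Sym n\<^esub>" by blast
qed (auto simp: Sym_def permutes_compose permutes_id comp_assoc)

lemma phiP_hom: "phiP n \<in> hom (TVB n) (Sym n)"
  unfolding hom_def
  by (auto simp: carrier_TVB mult_cls phiP_cls phiw_append Sym_def phiw_permutes[simplified])

lemma TVB_group_hom: "group_hom (TVB n) (Sym n) (phiP n)"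
  by (simp add: group_hom_def group_hom_axioms_def TVB_group Sym_group phiP_hom)



locale tvb = fixes n :: nat

sublocale tvb \<subseteq> G: group "TVB n" by (rule TVB_group)
sublocale tvb \<subseteq> H: group_hom "TVB n" "Sym n" "phiP n" by (rule TVB_group_hom)

context tvb begin

abbreviation tm (infixl "\<diamond>" 70) where "x \<diamond> y \<equiv> x \<otimes>\<^bsub>TVB n\<^esub> y"
abbreviation ti where "ti x \<equiv> inv\<^bsub>TVB n\<^esub> x"
abbreviation ee where "ee \<equiv> \<one>\<^bsub>TVB n\<^esub>"

lemma rel_cls: "(l, r) \<in> rels n \<Longrightarrow> cls n l = cls n r"
  by (rule cls_eqI) (use eqv.rel[of l r n "[]" "[]"] in simp)

lemma rho_car[simp]: "1 \<le> i \<Longrightarrow> i \<le> n - 1 \<Longrightarrow> rho n i \<in> carrier (TVB n)"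
  by (simp add: rho_def carrier_TVB)
lemma sigma_car[simp]: "1 \<le> i \<Longrightarrow> i \<le> n - 1 \<Longrightarrow> sigma n i \<in> carrier (TVB n)"
  by (simp add: sigma_def carrier_TVB)
lemma gamma_car[simp]: "1 \<le> i \<Longrightarrow> i \<le> n \<Longrightarrow> gamma n i \<in> carrier (TVB n)"
  by (simp add: gamma_def carrier_TVB)

lemma rr: "1 \<le> i \<Longrightarrow> i \<le> n - 1 \<Longrightarrow> rho n i \<diamond> rho n i = ee"
proof -
  assume a: "1 \<le> i" "i \<le> n - 1"
  have "(rw i @ rw i, []) \<in> rels n" using a unfolding rels_def by blast
  then show ?thesis using a by (simp add: rho_def mult_cls one_TVB rel_cls)
qed

lemma rr': "1 \<le> i \<Longrightarrow> i \<le> n - 1 \<Longrightarrow> x \<in> carrier (TVB n) \<Longrightarrow> rho n i \<diamond> (rho n i \<diamond> x) = x"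
  by (simp add: G.m_assoc[symmetric] rr)

lemma rinv: "1 \<le> i \<Longrightarrow> i \<le> n - 1 \<Longrightarrow> ti (rho n i) = rho n i"
  by (rule G.inv_equality) (simp_all add: rr)

lemma braid_r: "1 \<le> i \<Longrightarrow> i \<le> n - 2 \<Longrightarrow>
  rho n i \<diamond> rho n (i+1) \<diamond> rho n i = rho n (i+1) \<diamond> rho n i \<diamond> rho n (i+1)"
proof -
  assume a: "1 \<le> i" "i \<le> n - 2"
  have "(rw i @ rw (i+1) @ rw i, rw (i+1) @ rw i @ rw (i+1)) \<in> rels n" using a unfolding rels_def by blast
  moreover have "i + 1 \<le> n - 1" using a by arith
  ultimately show ?thesis using a by (simp add: rho_def mult_cls rel_cls)
qed

lemma comm_r: "1 \<le> i \<Longrightarrow> i \<le> n - 1 \<Longrightarrow> 1 \<le> j \<Longrightarrow> j \<le> n - 1 \<Longrightarrow> i + 2 \<le> j \<or> j + 2 \<le> i \<Longrightarrow>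
  rho n i \<diamond> rho n j = rho n j \<diamond> rho n i"
proof -
  assume a: "1 \<le> i" "i \<le> n - 1" "1 \<le> j" "j \<le> n - 1" "i + 2 \<le> j \<or> j + 2 \<le> i"
  have "(rw i @ rw j, rw j @ rw i) \<in> rels n" using a unfolding rels_def by blast
  then show ?thesis using a by (simp add: rho_def mult_cls rel_cls)
qed

lemma mixed: "1 \<le> i \<Longrightarrow> i \<le> n - 2 \<Longrightarrow>
  rho n i \<diamond> rho n (i+1) \<diamond> sigma n i = sigma n (i+1) \<diamond> rho n i \<diamond> rho n (i+1)"
proof -
  assume a: "1 \<le> i" "i \<le> n - 2"
  have "(rw i @ rw (i+1) @ sw i, sw (i+1) @ rw i @ rw (i+1)) \<in> rels n" using a unfolding rels_def by blast
  moreover have "i + 1 \<le> n - 1" using a by arith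
  ultimately show ?thesis using a by (simp add: rho_def sigma_def mult_cls rel_cls)
qed

lemma comm_sr: "1 \<le> i \<Longrightarrow> i \<le> n - 1 \<Longrightarrow> 1 \<le> j \<Longrightarrow> j \<le> n - 1 \<Longrightarrow> i + 2 \<le> j \<or> j + 2 \<le> i \<Longrightarrow>
  sigma n i \<diamond> rho n j = rho n j \<diamond> sigma n i"
proof -
  assume a: "1 \<le> i" "i \<le> n - 1" "1 \<le> j" "j \<le> n - 1" "i + 2 \<le> j \<or> j + 2 \<le> i"
  have "(sw i @ rw j, rw j @ sw i) \<in> rels n" using a unfolding rels_def by blast
  then show ?thesis using a by (simp add: rho_def sigma_def mult_cls rel_cls)
qed

lemma rg: "1 \<le> i \<Longrightarrow> i \<le> n - 1 \<Longrightarrow> rho n i \<diamond> gamma n i = gamma n (i+1) \<diamond> rho n i"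
proof -
  assume a: "1 \<le> i" "i \<le> n - 1"
  have "(rw i @ gw i, gw (i+1) @ rw i) \<in> rels n" using a unfolding rels_def by blast
  then show ?thesis using a by (simp add: rho_def gamma_def mult_cls rel_cls)
qed

lemma gr: "1 \<le> i \<Longrightarrow> i \<le> n - 1 \<Longrightarrow> 1 \<le> j \<Longrightarrow> j \<le> n \<Longrightarrow> j \<noteq> i \<Longrightarrow> j \<noteq> i + 1 \<Longrightarrow>
  gamma n j \<diamond> rho n i = rho n i \<diamond> gamma n j"
proof -
  assume a: "1 \<le> i" "i \<le> n - 1" "1 \<le> j" "j \<le> n" "j \<noteq> i" "j \<noteq> i + 1"
  have "(gw j @ rw i, rw i @ gw j) \<in> rels n" using a unfolding rels_def by blast
  then show ?thesis using a by (simp add: rho_def gamma_def mult_cls rel_cls)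
qed

lemma phiP_rho: "1 \<le> i \<Longrightarrow> i \<le> n - 1 \<Longrightarrow> phiP n (rho n i) = transpose i (i + 1)"
  by (simp add: rho_def phiP_cls)

end


lemma Sym_mult[simp]: "p \<otimes>\<^bsub>Sym n\<^esub> q = q \<circ> p" by (simp add: Sym_def)
lemma Sym_one[simp]: "\<one>\<^bsub>Sym n\<^esub> = id" by (simp add: Sym_def)
lemma Sym_carrier: "carrier (Sym n) = {p. p permutes {1..n}}" by (simp add: Sym_def)

context tvb begin

definition genR :: "nat \<Rightarrow> nat \<Rightarrow> word set set" where
  "genR a b = generate (TVB n) {rho n i | i. a \<le> i \<and> i < b}"

lemma gens_car: "1 \<le> a \<Longrightarrow> b \<le> n \<Longrightarrow> {rho n i | i. a \<le> i \<and> i < b} \<subseteq> carrier (TVB n)"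
  by auto

lemma genR_car: "1 \<le> a \<Longrightarrow> b \<le> n \<Longrightarrow> genR a b \<subseteq> carrier (TVB n)"
  unfolding genR_def by (rule G.generate_incl[OF gens_car])

lemma phiP_mult: "x \<in> carrier (TVB n) \<Longrightarrow> y \<in> carrier (TVB n) \<Longrightarrow> phiP n (x \<diamond> y) = phiP n y \<circ> phiP n x"
  by simp

lemma trans_step: "x < y \<Longrightarrow> transpose x (Suc y) = transpose y (Suc y) \<circ> transpose x y \<circ> transpose y (Suc y)"
  by (auto simp: fun_eq_iff transpose_def)

lemma surj_gen:
  assumes ab: "1 \<le> a" "b \<le> n" and p: "p permutes {a..b}"
  shows "\<exists>x\<in>genR a b. phiP n x = p"
proof -
  let ?T = "phiP n ` genR a b"
  have closed: "g \<circ> f \<in> ?T" if fg: "f \<in> ?T" "g \<in> ?T" for f g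
  proof -
    obtain x y where xy: "x \<in> genR a b" "y \<in> genR a b" "f = phiP n x" "g = phiP n y"
      using fg by blast
    have "x \<diamond> y \<in> genR a b" using xy(1,2) unfolding genR_def by (rule generate.eng)
    moreover have "phiP n (x \<diamond> y) = g \<circ> f"
      using xy genR_car[OF ab] by (subst phiP_mult) auto
    ultimately show ?thesis by force
  qed
  have idT: "id \<in> ?T"
  proof -
    have "ee \<in> genR a b" unfolding genR_def by (rule generate.one)
    then show ?thesis by force
  qed
  have tr1: "transpose x (Suc x) \<in> ?T" if "a \<le> x" "Suc x \<le> b" for x
  proof -
    have "rho n x \<in> genR a b" unfolding genR_def using that by (intro generate.incl) auto
    moreover have "phiP n (rho n x) = transpose x (Suc x)" using that ab by (simp add: phiP_rho)
    ultimately show ?thesis by force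
  qed
  have tr: "transpose x y \<in> ?T" if "a \<le> x" "x < y" "y \<le> b" for x y
    using that
  proof (induction y rule: less_induct)
    case (less y)
    show ?case
    proof (cases "y = Suc x")
      case True then show ?thesis using tr1 less by simp
    next
      case False
      then obtain y' where y': "y = Suc y'" "x < y'" using less by (cases y) auto
      have "transpose x y' \<in> ?T" using less y' by auto
      moreover have "transpose y' y \<in> ?T" using tr1[of y'] less y' by simp
      ultimately show ?thesis using closed trans_step[OF y'(2)] y' by metis
    qed
  qed
  have "p \<in> ?T"
    using p finite_atLeastAtMost
  proof (induction rule: permutes_induct)
    case id then show ?case by (rule idT)
  next
    case (swap x y p)
    have "transpose x y \<in> ?T"
    proof (cases "x < y")
      case True then show ?thesis using swap tr by auto
    next
      case False then have "y < x" using swap by auto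
      then show ?thesis using swap tr[of y x] by (auto simp: transpose_commute)
    qed
    then show ?case using closed swap by blast
  qed
  then show ?thesis by auto
qed

fun cc :: "nat \<Rightarrow> nat \<Rightarrow> word set" where
  "cc k 0 = ee"
| "cc k (Suc m) = (if k \<le> Suc m then rho n (Suc m) \<diamond> cc k m else ee)"

lemma cc_car: "1 \<le> k \<Longrightarrow> m \<le> n - 1 \<Longrightarrow> cc k m \<in> carrier (TVB n)"
  by (induction m) auto

lemma cc_low: "m < k \<Longrightarrow> cc k m = ee"
  by (induction m) auto

lemma cc_step: "1 \<le> k \<Longrightarrow> k \<le> m \<Longrightarrow> m \<le> n - 1 \<Longrightarrow> cc k m = cc (k+1) m \<diamond> rho n k"
proof (induction m)
  case 0 then show ?case by simp
next
  case (Suc m)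
  show ?case
  proof (cases "k = Suc m")
    case True
    then show ?thesis using Suc.prems by (simp add: cc_low)
  next
    case False
    then have "k \<le> m" using Suc.prems by simp
    then show ?thesis using Suc by (simp add: G.m_assoc cc_car)
  qed
qed

lemma cc_comm: "1 \<le> k \<Longrightarrow> m \<le> n - 1 \<Longrightarrow> 1 \<le> i \<Longrightarrow> i \<le> n - 1 \<Longrightarrow>
   (\<forall>j. k \<le> j \<and> j \<le> m \<longrightarrow> i + 2 \<le> j \<or> j + 2 \<le> i) \<Longrightarrow> cc k m \<diamond> rho n i = rho n i \<diamond> cc k m"
proof (induction m)
  case 0 then show ?case by simp
next
  case (Suc m)
  show ?case
  proof (cases "k \<le> Suc m")
    case True
    have c: "rho n (Suc m) \<diamond> rho n i = rho n i \<diamond> rho n (Suc m)"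
      using Suc.prems True by (intro comm_r) auto
    have "cc k m \<diamond> rho n i = rho n i \<diamond> cc k m" using Suc by auto
    then show ?thesis using True Suc.prems c cc_car
      by (simp add: G.m_assoc) (simp add: G.m_assoc[symmetric])
  next
    case False then show ?thesis using Suc.prems by simp
  qed
qed

lemma cc_shift: "1 \<le> k \<Longrightarrow> k < i \<Longrightarrow> i \<le> m \<Longrightarrow> m \<le> n - 1 \<Longrightarrow> cc k m \<diamond> rho n i = rho n (i - 1) \<diamond> cc k m"
proof (induction m)
  case 0 then show ?case by simp
next
  case (Suc m)
  show ?case
  proof (cases "i = Suc m")
    case True
    then obtain m' where m': "m = Suc m'" "k \<le> m" using Suc.prems by (cases m) auto
    have ccm: "cc k m = rho n m \<diamond> cc k m'" using m' by simp
    have c': "cc k m' \<diamond> rho n i = rho n i \<diamond> cc k m'"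
      using Suc.prems True m' by (intro cc_comm) auto
    have br: "rho n m \<diamond> rho n (m+1) \<diamond> rho n m = rho n (m+1) \<diamond> rho n m \<diamond> rho n (m+1)"
      using Suc.prems m' by (intro braid_r) auto
    have car: "cc k m' \<in> carrier (TVB n)" "rho n m \<in> carrier (TVB n)" "rho n i \<in> carrier (TVB n)"
      using Suc.prems m' True by (auto intro: cc_car)
    have "cc k (Suc m) \<diamond> rho n i = rho n i \<diamond> rho n m \<diamond> (cc k m' \<diamond> rho n i)"
      using Suc.prems True m' car by (simp add: G.m_assoc)
    also have "\<dots> = (rho n i \<diamond> rho n m \<diamond> rho n i) \<diamond> cc k m'"
      using c' car by (simp add: G.m_assoc)
    also have "\<dots> = (rho n m \<diamond> rho n i \<diamond> rho n m) \<diamond> cc k m'"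
      using br True by simp
    also have "\<dots> = rho n (i - 1) \<diamond> cc k (Suc m)"
      using True m' car Suc.prems by (simp add: G.m_assoc)
    finally show ?thesis .
  next
    case False
    then have im: "i \<le> m" using Suc.prems by simp
    have ih: "cc k m \<diamond> rho n i = rho n (i - 1) \<diamond> cc k m" using Suc im by auto
    have c: "rho n (Suc m) \<diamond> rho n (i - 1) = rho n (i - 1) \<diamond> rho n (Suc m)"
      using Suc.prems im by (intro comm_r) auto
    have car: "cc k m \<in> carrier (TVB n)" "rho n (Suc m) \<in> carrier (TVB n)" "rho n i \<in> carrier (TVB n)"
       "rho n (i - 1) \<in> carrier (TVB n)"
      using Suc.prems im by (auto intro: cc_car)
    have "cc k (Suc m) \<diamond> rho n i = rho n (Suc m) \<diamond> (cc k m \<diamond> rho n i)"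
      using Suc.prems car by (simp add: G.m_assoc)
    also have "\<dots> = (rho n (Suc m) \<diamond> rho n (i - 1)) \<diamond> cc k m" using ih car by (simp add: G.m_assoc)
    also have "\<dots> = rho n (i - 1) \<diamond> cc k (Suc m)" using c car Suc.prems by (simp add: G.m_assoc)
    finally show ?thesis .
  qed
qed

fun NN :: "nat \<Rightarrow> word set set" where
  "NN 0 = {ee}"
| "NN (Suc m) = (\<lambda>(u, k). u \<diamond> cc k m) ` (NN m \<times> {1..Suc m})"

lemma NN_car: "m \<le> n \<Longrightarrow> NN m \<subseteq> carrier (TVB n)"
  by (induction m) (auto intro!: cc_car)

lemma NN_one: "m \<le> n \<Longrightarrow> ee \<in> NN m"
proof (induction m)
  case (Suc m)
  have "ee \<diamond> cc (Suc m) m \<in> NN (Suc m)" using Suc unfolding NN.simps by (intro rev_image_eqI[of "(ee, Suc m)"]) auto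
  then show ?case by (simp add: cc_low)
qed simp

lemma NN_card: "finite (NN m) \<and> card (NN m) \<le> fact m"
proof (induction m)
  case (Suc m)
  have f: "finite (NN m \<times> {1..Suc m})" using Suc by simp
  have "card (NN (Suc m)) \<le> card (NN m \<times> {1..Suc m})" using card_image_le[OF f] by simp
  also have "\<dots> = card (NN m) * Suc m" by (simp add: card_cartesian_product)
  also have "\<dots> \<le> fact m * Suc m" using Suc by (intro mult_le_mono1) auto
  also have "\<dots> = fact (Suc m)" by (simp add: fact_Suc)
  finally show ?case using f by simp
qed simp

lemma NN_closed: "m \<le> n \<Longrightarrow> x \<in> NN m \<Longrightarrow> 1 \<le> i \<Longrightarrow> i < m \<Longrightarrow> x \<diamond> rho n i \<in> NN m"
proof (induction m arbitrary: x i)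
  case 0 then show ?case by simp
next
  case (Suc m)
  obtain u k where uk: "u \<in> NN m" "1 \<le> k" "k \<le> Suc m" "x = u \<diamond> cc k m" using Suc.prems by auto
  have mn: "m \<le> n - 1" "m \<le> n" using Suc.prems by auto
  have ucar: "u \<in> carrier (TVB n)" using NN_car[OF mn(2)] uk by auto
  have ri: "rho n i \<in> carrier (TVB n)" using Suc.prems by auto
  have cck: "cc k m \<in> carrier (TVB n)" using uk mn by (intro cc_car) auto
  have mem: "v \<diamond> cc k' m \<in> NN (Suc m)" if "v \<in> NN m" "1 \<le> k'" "k' \<le> Suc m" for v k'
    using that unfolding NN.simps by (intro rev_image_eqI[of "(v, k')"]) auto
  show ?case
  proof (cases "k = Suc m")
    case True
    then have x: "x \<diamond> rho n i = u \<diamond> rho n i" using uk ucar by (simp add: cc_low)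
    show ?thesis
    proof (cases "i = m")
      case True
      have "cc m m = rho n m" using Suc.prems True by (cases m) (auto simp: cc_low)
      then show ?thesis using x mem[OF uk(1), of m] True Suc.prems by simp
    next
      case False
      then have "u \<diamond> rho n i \<in> NN m" using Suc uk by auto
      then have "(u \<diamond> rho n i) \<diamond> cc (Suc m) m \<in> NN (Suc m)" by (rule mem) auto
      then show ?thesis using x ucar ri by (simp add: cc_low)
    qed
  next
    case False
    then have km: "k \<le> m" using uk by simp
    consider "i = k" | "i + 1 = k" | "i + 2 \<le> k" | "k < i" by linarith
    then show ?thesis
    proof cases
      case 1
      have "cc k m = cc (k+1) m \<diamond> rho n k" using cc_step uk km mn by auto
      then have "x \<diamond> rho n i = u \<diamond> cc (k+1) m"
        using 1 uk ucar cc_car[of "k+1" m] mn rr[of k] Suc.prems by (simp add: G.m_assoc)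
      then show ?thesis using mem[OF uk(1), of "k+1"] uk km by simp
    next
      case 2
      have "cc i m = cc (i+1) m \<diamond> rho n i" using cc_step Suc.prems km mn 2 by auto
      then have "x \<diamond> rho n i = u \<diamond> cc i m" using 2 uk ucar cck ri by (simp add: G.m_assoc)
      then show ?thesis using mem[OF uk(1), of i] Suc.prems by simp
    next
      case 3
      have c: "cc k m \<diamond> rho n i = rho n i \<diamond> cc k m" using uk mn Suc.prems 3 by (intro cc_comm) auto
      have "x \<diamond> rho n i = (u \<diamond> rho n i) \<diamond> cc k m" using uk c ucar cck ri by (simp add: G.m_assoc)
      moreover have "u \<diamond> rho n i \<in> NN m" using Suc uk 3 km by auto
      ultimately show ?thesis using mem uk by auto
    next
      case 4
      have c: "cc k m \<diamond> rho n i = rho n (i - 1) \<diamond> cc k m" using uk mn Suc.prems 4 by (intro cc_shift) auto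
      have r1: "rho n (i - 1) \<in> carrier (TVB n)" using 4 uk Suc.prems by auto
      have "x \<diamond> rho n i = (u \<diamond> rho n (i - 1)) \<diamond> cc k m" using uk c ucar cck ri r1 by (simp add: G.m_assoc)
      moreover have "u \<diamond> rho n (i - 1) \<in> NN m" using Suc uk 4 km by auto
      ultimately show ?thesis using mem uk by auto
    qed
  qed
qed

lemma RhoSub_eq: "RhoSub n = genR 1 n"
proof -
  have "{rho n i | i. 1 \<le> i \<and> i \<le> n - 1} = {rho n i | i. 1 \<le> i \<and> i < n}" by force
  then show ?thesis by (simp add: RhoSub_def genR_def)
qed

lemma NN_mult: "x \<in> NN n \<Longrightarrow> g \<in> genR 1 n \<Longrightarrow> x \<diamond> g \<in> NN n"
proof -
  assume x: "x \<in> NN n" and g: "g \<in> genR 1 n"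
  have "\<forall>x\<in>NN n. x \<diamond> g \<in> NN n" using g unfolding genR_def
  proof (induction rule: generate.induct)
    case one then show ?case using NN_car[of n] by auto
  next
    case (incl h) then show ?case using NN_closed by auto
  next
    case (inv h)
    then obtain i where "h = rho n i" "1 \<le> i" "i < n" by auto
    then show ?case using NN_closed rinv by auto
  next
    case (eng h1 h2)
    have "h1 \<in> carrier (TVB n)" "h2 \<in> carrier (TVB n)"
      using eng.hyps genR_car[of 1 n] unfolding genR_def by auto
    show ?case
    proof
      fix x assume x: "x \<in> NN n"
      then have "x \<in> carrier (TVB n)" using NN_car[of n] by auto
      then have "x \<diamond> (h1 \<diamond> h2) = (x \<diamond> h1) \<diamond> h2" using \<open>h1 \<in> carrier (TVB n)\<close> \<open>h2 \<in> carrier (TVB n)\<close> by (simp add: G.m_assoc)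
      then show "x \<diamond> (h1 \<diamond> h2) \<in> NN n" using eng.IH x by auto
    qed
  qed
  then show ?thesis using x by auto
qed

lemma genR_NN: "genR 1 n \<subseteq> NN n"
proof
  fix g assume "g \<in> genR 1 n"
  then have "ee \<diamond> g \<in> NN n" using NN_mult NN_one by auto
  moreover have "g \<in> carrier (TVB n)" using \<open>g \<in> genR 1 n\<close> genR_car by auto
  ultimately show "g \<in> NN n" by simp
qed

lemma img_RhoSub: "phiP n ` RhoSub n = carrier (Sym n)"
proof
  show "phiP n ` RhoSub n \<subseteq> carrier (Sym n)" using genR_car[of 1 n] RhoSub_eq by auto
  show "carrier (Sym n) \<subseteq> phiP n ` RhoSub n"
    using surj_gen[of 1 n] RhoSub_eq by (force simp: Sym_carrier)
qed

lemma inj_RhoSub: "inj_on (phiP n) (RhoSub n)"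
proof -
  have fin: "finite (RhoSub n)" using NN_card genR_NN RhoSub_eq finite_subset by metis
  have c1: "card (RhoSub n) \<le> fact n" using NN_card genR_NN RhoSub_eq card_mono le_trans by metis
  have c2: "card (carrier (Sym n)) = fact n" using card_permutations[of "{1..n}" n] by (simp add: Sym_carrier)
  have "card (phiP n ` RhoSub n) = card (RhoSub n)"
    using card_image_le[OF fin, of "phiP n"] c1 c2 img_RhoSub by simp
  then show ?thesis using eq_card_imp_inj_on[OF fin] by blast
qed

end


lemma (in group) comm_inv: "x \<in> carrier G \<Longrightarrow> y \<in> carrier G \<Longrightarrow> x \<otimes> y = y \<otimes> x \<Longrightarrow> inv x \<otimes> y = y \<otimes> inv x"
proof -
  assume a: "x \<in> carrier G" "y \<in> carrier G" "x \<otimes> y = y \<otimes> x"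
  have "inv x \<otimes> y = inv x \<otimes> (y \<otimes> x) \<otimes> inv x" using a by (simp add: m_assoc)
  also have "\<dots> = inv x \<otimes> (x \<otimes> y) \<otimes> inv x" using a by simp
  also have "\<dots> = y \<otimes> inv x" using a(1,2) by (simp add: m_assoc[symmetric])
  finally show ?thesis .
qed

lemma (in group) comm_mult: "x \<in> carrier G \<Longrightarrow> y \<in> carrier G \<Longrightarrow> z \<in> carrier G \<Longrightarrow>
  x \<otimes> z = z \<otimes> x \<Longrightarrow> y \<otimes> z = z \<otimes> y \<Longrightarrow> (x \<otimes> y) \<otimes> z = z \<otimes> (x \<otimes> y)"
proof -
  assume a: "x \<in> carrier G" "y \<in> carrier G" "z \<in> carrier G" "x \<otimes> z = z \<otimes> x" "y \<otimes> z = z \<otimes> y"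
  have "(x \<otimes> y) \<otimes> z = x \<otimes> (y \<otimes> z)" using a by (simp add: m_assoc)
  also have "\<dots> = (x \<otimes> z) \<otimes> y" using a(1-3,5) by (simp add: m_assoc)
  also have "\<dots> = (z \<otimes> x) \<otimes> y" using a by simp
  also have "\<dots> = z \<otimes> (x \<otimes> y)" using a(1-3) by (simp add: m_assoc)
  finally show ?thesis .
qed

context tvb begin

lemma RhoSub_sub: "subgroup (RhoSub n) (TVB n)"
  unfolding RhoSub_eq genR_def by (rule G.generate_is_subgroup[OF gens_car]) auto

lemma RhoSub_car: "RhoSub n \<subseteq> carrier (TVB n)"
  by (rule subgroup.subset[OF RhoSub_sub])

lemma rho_RhoSub: "1 \<le> i \<Longrightarrow> i \<le> n - 1 \<Longrightarrow> rho n i \<in> RhoSub n"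
proof -
  assume "1 \<le> i" "i \<le> n - 1"
  then have "rho n i \<in> {rho n i | i. 1 \<le> i \<and> i \<le> n - 1}" by blast
  then show ?thesis unfolding RhoSub_def by (rule generate.incl)
qed

lemma RhoSub_mult: "x \<in> RhoSub n \<Longrightarrow> y \<in> RhoSub n \<Longrightarrow> x \<diamond> y \<in> RhoSub n"
  by (rule subgroup.m_closed[OF RhoSub_sub])

lemma phiP_perm: "x \<in> carrier (TVB n) \<Longrightarrow> phiP n x permutes {1..n}"
  using H.hom_closed[of x] by (simp add: Sym_carrier)

lemma perm_range: "x \<in> carrier (TVB n) \<Longrightarrow> 1 \<le> i \<Longrightarrow> i \<le> n \<Longrightarrow> 1 \<le> phiP n x i \<and> phiP n x i \<le> n"
  using permutes_in_image[OF phiP_perm[of x], of i] by auto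

lemma gamma_gen: "1 \<le> k \<Longrightarrow> k \<le> n - 1 \<Longrightarrow> 1 \<le> i \<Longrightarrow> i \<le> n \<Longrightarrow>
   rho n k \<diamond> gamma n i \<diamond> rho n k = gamma n (transpose k (k+1) i)"
proof -
  assume a: "1 \<le> k" "k \<le> n - 1" "1 \<le> i" "i \<le> n"
  have c: "rho n k \<in> carrier (TVB n)" "gamma n i \<in> carrier (TVB n)" "gamma n k \<in> carrier (TVB n)"
     "gamma n (k+1) \<in> carrier (TVB n)" using a by auto
  have r: "rho n k \<diamond> gamma n k = gamma n (k+1) \<diamond> rho n k" using rg a by auto
  consider "i = k" | "i = k + 1" | "i \<noteq> k \<and> i \<noteq> k + 1" by blast
  then show ?thesis
  proof cases
    case 1 then show ?thesis using r c rr a by (simp add: G.m_assoc)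
  next
    case 2
    have "rho n k \<diamond> gamma n (k+1) \<diamond> rho n k = rho n k \<diamond> (rho n k \<diamond> gamma n k)"
      using r c by (simp add: G.m_assoc)
    then show ?thesis using 2 c rr' a by simp
  next
    case 3
    then have "gamma n i \<diamond> rho n k = rho n k \<diamond> gamma n i" using gr a by auto
    then show ?thesis using 3 c rr' a by (simp add: G.m_assoc)
  qed
qed

lemma conj_gen_induct:
  assumes a: "a \<in> RhoSub n"
    and P1: "\<And>x. x \<in> carrier (TVB n) \<Longrightarrow> P x"
    and gen: "\<And>k. 1 \<le> k \<Longrightarrow> k \<le> n - 1 \<Longrightarrow> Q (rho n k)"
    and one: "Q ee"
    and eng: "\<And>x y. x \<in> RhoSub n \<Longrightarrow> y \<in> RhoSub n \<Longrightarrow> Q x \<Longrightarrow> Q y \<Longrightarrow> Q (x \<diamond> y)"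
  shows "Q a"
  using a unfolding RhoSub_def
proof (induction rule: generate.induct)
  case one then show ?case by (rule assms)
next
  case (incl h) then show ?case using gen by auto
next
  case (inv h) then show ?case using gen rinv by auto
next
  case (eng h1 h2) then show ?case using assms(5) unfolding RhoSub_def by blast
qed

lemma gamma_conj: "a \<in> RhoSub n \<Longrightarrow> \<forall>i. 1 \<le> i \<and> i \<le> n \<longrightarrow> ti a \<diamond> gamma n i \<diamond> a = gamma n (phiP n a i)"
proof (rule conj_gen_induct[where P = "\<lambda>x. True"])
  fix k assume k: "1 \<le> k" "k \<le> n - 1"
  show "\<forall>i. 1 \<le> i \<and> i \<le> n \<longrightarrow> ti (rho n k) \<diamond> gamma n i \<diamond> rho n k = gamma n (phiP n (rho n k) i)"
    using k gamma_gen by (simp add: rinv phiP_rho)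
next
  show "\<forall>i. 1 \<le> i \<and> i \<le> n \<longrightarrow> ti ee \<diamond> gamma n i \<diamond> ee = gamma n (phiP n ee i)" by simp
next
  fix x y assume xy: "x \<in> RhoSub n" "y \<in> RhoSub n"
    and IH: "\<forall>i. 1 \<le> i \<and> i \<le> n \<longrightarrow> ti x \<diamond> gamma n i \<diamond> x = gamma n (phiP n x i)"
            "\<forall>i. 1 \<le> i \<and> i \<le> n \<longrightarrow> ti y \<diamond> gamma n i \<diamond> y = gamma n (phiP n y i)"
  have c: "x \<in> carrier (TVB n)" "y \<in> carrier (TVB n)" using xy RhoSub_car by auto
  show "\<forall>i. 1 \<le> i \<and> i \<le> n \<longrightarrow> ti (x \<diamond> y) \<diamond> gamma n i \<diamond> (x \<diamond> y) = gamma n (phiP n (x \<diamond> y) i)"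
  proof (intro allI impI)
    fix i assume i: "1 \<le> i \<and> i \<le> n"
    have "ti (x \<diamond> y) \<diamond> gamma n i \<diamond> (x \<diamond> y) = ti y \<diamond> (ti x \<diamond> gamma n i \<diamond> x) \<diamond> y"
      using c i by (simp add: G.inv_mult_group G.m_assoc)
    also have "\<dots> = ti y \<diamond> gamma n (phiP n x i) \<diamond> y" using IH i by simp
    also have "\<dots> = gamma n (phiP n y (phiP n x i))" using IH perm_range[OF c(1)] i by simp
    finally show "ti (x \<diamond> y) \<diamond> gamma n i \<diamond> (x \<diamond> y) = gamma n (phiP n (x \<diamond> y) i)" using c by simp
  qed
qed simp_all

end

abbreviation rws :: "nat list \<Rightarrow> word" where "rws L \<equiv> map (\<lambda>k. (False, Rg k)) L"

lemma rws_words: "(\<forall>k\<in>set L. 1 \<le> k \<and> k \<le> n - 1) \<Longrightarrow> rws L \<in> words n"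
  by (induction L) auto

lemma phiw_rws_range: "a \<le> b \<Longrightarrow> phiw (rws [a..<b]) a = b \<and> (\<forall>x<a. phiw (rws [a..<b]) x = x)"
proof (induction b rule: dec_induct)
  case base then show ?case by simp
next
  case (step b)
  have "phiw (rws [a..<Suc b]) = transpose b (Suc b) \<circ> phiw (rws [a..<b])"
    using step by (simp add: phiw_append)
  then show ?case using step by (auto simp: transpose_def)
qed

context tvb begin

lemma rws_car: "(\<forall>k\<in>set L. 1 \<le> k \<and> k \<le> n - 1) \<Longrightarrow> cls n (rws L) \<in> carrier (TVB n)"
  by (simp add: carrier_TVB rws_words)

lemma inv_rws: "(\<forall>k\<in>set L. 1 \<le> k \<and> k \<le> n - 1) \<Longrightarrow> ti (cls n (rws L)) = cls n (rws (rev L))"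
proof (induction L)
  case Nil then show ?case by (simp add: one_TVB[symmetric])
next
  case (Cons k L)
  have w: "rws L \<in> words n" "rws [k] \<in> words n" "rws (rev L) \<in> words n"
    using Cons.prems by (auto intro!: rws_words)
  have "cls n (rws (k # L)) = rho n k \<diamond> cls n (rws L)"
    using w by (simp add: rho_def mult_cls)
  moreover have c: "rho n k \<in> carrier (TVB n)" "cls n (rws L) \<in> carrier (TVB n)"
    using Cons.prems w by (auto simp: carrier_TVB rho_def)
  ultimately have "ti (cls n (rws (k # L))) = ti (cls n (rws L)) \<diamond> ti (rho n k)"
    using G.inv_mult_group[OF c] by simp
  also have "\<dots> = cls n (rws (rev L)) \<diamond> rho n k" using Cons by (simp add: rinv)
  also have "\<dots> = cls n (rws (rev (k # L)))" using w by (simp add: rho_def mult_cls)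
  finally show ?case .
qed

lemma rws_RhoSub: "(\<forall>k\<in>set L. 1 \<le> k \<and> k \<le> n - 1) \<Longrightarrow> cls n (rws L) \<in> RhoSub n"
proof (induction L)
  case Nil then show ?case using subgroup.one_closed[OF RhoSub_sub] by (simp add: one_TVB)
next
  case (Cons k L)
  have w: "rws L \<in> words n" "rws [k] \<in> words n"
    using Cons.prems by (auto intro!: rws_words)
  have "cls n (rws (k # L)) = rho n k \<diamond> cls n (rws L)"
    using w by (simp add: rho_def mult_cls)
  then show ?case using Cons RhoSub_mult rho_RhoSub by auto
qed

lemma inv_sw: "ti (sigma n i) = cls n [(True, Sg i)]" if "1 \<le> i" "i \<le> n - 1"
  using that by (simp add: sigma_def inv_cls inv_word_def)

lemma lam_adj: "1 \<le> i \<Longrightarrow> i \<le> n - 1 \<Longrightarrow> lambda n i (i+1) = rho n i \<diamond> ti (sigma n i)"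
  by (simp add: inv_sw lambda_def lamw_def rho_def mult_cls)

lemma lam_rev: "1 \<le> i \<Longrightarrow> i \<le> n - 1 \<Longrightarrow> lambda n (i+1) i = rho n i \<diamond> lambda n i (i+1) \<diamond> rho n i"
  by (simp add: lambda_def lamw_def rho_def mult_cls)

lemma lam_far1: "1 \<le> i \<Longrightarrow> i + 1 < j \<Longrightarrow> j \<le> n \<Longrightarrow>
   lambda n i j = ti (cls n (rws [i+1..<j])) \<diamond> lambda n i (i+1) \<diamond> cls n (rws [i+1..<j])"
proof -
  assume a: "1 \<le> i" "i + 1 < j" "j \<le> n"
  have r: "\<forall>k\<in>set [i+1..<j]. 1 \<le> k \<and> k \<le> n - 1" using a by auto
  have w: "rws [i+1..<j] \<in> words n" "rws (rev [i+1..<j]) \<in> words n" using r rws_words[of "rev _"] rws_words by auto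
  have li: "lamw i (i+1) = rw i @ [(True, Sg i)]" by (simp add: lamw_def)
  have "lamw i j = rws (rev [i+1..<j]) @ lamw i (i+1) @ rws [i+1..<j]" using a li by (simp add: lamw_def)
  then show ?thesis using w r a li by (simp add: lambda_def inv_rws mult_cls)
qed

lemma lam_far2: "1 \<le> j \<Longrightarrow> j + 1 < i \<Longrightarrow> i \<le> n \<Longrightarrow>
   lambda n i j = ti (cls n (rws [j+1..<i])) \<diamond> lambda n (j+1) j \<diamond> cls n (rws [j+1..<i])"
proof -
  assume a: "1 \<le> j" "j + 1 < i" "i \<le> n"
  have r: "\<forall>k\<in>set [j+1..<i]. 1 \<le> k \<and> k \<le> n - 1" using a by auto
  have w: "rws [j+1..<i] \<in> words n" "rws (rev [j+1..<i]) \<in> words n" using r rws_words[of "rev _"] rws_words by auto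
  have li: "lamw (j+1) j = rw j @ (rw j @ [(True, Sg j)]) @ rw j" by (simp add: lamw_def)
  have "lamw i j = rws (rev [j+1..<i]) @ lamw (j+1) j @ rws [j+1..<i]" using a li by (simp add: lamw_def)
  then show ?thesis using w r a li by (simp add: lambda_def inv_rws mult_cls)
qed

end

context tvb begin

lemma conj_mult: "a \<in> carrier (TVB n) \<Longrightarrow> b \<in> carrier (TVB n) \<Longrightarrow> x \<in> carrier (TVB n) \<Longrightarrow>
  ti (a \<diamond> b) \<diamond> x \<diamond> (a \<diamond> b) = ti b \<diamond> (ti a \<diamond> x \<diamond> a) \<diamond> b"
  by (simp add: G.inv_mult_group G.m_assoc)

lemma lam_adj_car: "1 \<le> i \<Longrightarrow> i \<le> n - 1 \<Longrightarrow> lambda n i (i+1) \<in> carrier (TVB n)"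
proof -
  assume a: "1 \<le> i" "i \<le> n - 1"
  have "lambda n i (i+1) = rho n i \<diamond> ti (sigma n i)" using a by (rule lam_adj)
  moreover have "rho n i \<diamond> ti (sigma n i) \<in> carrier (TVB n)" using a by simp
  ultimately show ?thesis by simp
qed

lemma K: assumes "1 \<le> i" "i + 1 \<le> n - 1"
  shows "rho n i \<diamond> rho n (i+1) \<diamond> lambda n i (i+1) \<diamond> (rho n (i+1) \<diamond> rho n i) = lambda n (i+1) (i+2)"
proof -
  let ?r1 = "rho n i" and ?r2 = "rho n (i+1)" and ?s1 = "sigma n i" and ?s2 = "sigma n (i+1)"
  have c: "?r1 \<in> carrier (TVB n)" "?r2 \<in> carrier (TVB n)" "?s1 \<in> carrier (TVB n)" "?s2 \<in> carrier (TVB n)"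
    using assms by auto
  have mx: "?r1 \<diamond> ?r2 \<diamond> ?s1 = ?s2 \<diamond> ?r1 \<diamond> ?r2" using mixed assms by auto
  have br: "?r1 \<diamond> ?r2 \<diamond> ?r1 = ?r2 \<diamond> ?r1 \<diamond> ?r2" using braid_r assms by auto
  have br': "?r2 \<diamond> (?r1 \<diamond> (?r2 \<diamond> x)) = ?r1 \<diamond> (?r2 \<diamond> (?r1 \<diamond> x))" if "x \<in> carrier (TVB n)" for x
    using br c that by (simp add: G.m_assoc[symmetric])
  have rr1: "?r1 \<diamond> (?r1 \<diamond> x) = x" if "x \<in> carrier (TVB n)" for x using rr' assms that by auto
  have rr2: "?r2 \<diamond> (?r2 \<diamond> x) = x" if "x \<in> carrier (TVB n)" for x using rr' assms that by auto
  have s2: "?s2 = ?r1 \<diamond> (?r2 \<diamond> (?s1 \<diamond> (?r2 \<diamond> ?r1)))"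
  proof -
    have "?r1 \<diamond> (?r2 \<diamond> (?s1 \<diamond> (?r2 \<diamond> ?r1))) = (?r1 \<diamond> ?r2 \<diamond> ?s1) \<diamond> (?r2 \<diamond> ?r1)"
      using c by (simp add: G.m_assoc)
    also have "\<dots> = (?s2 \<diamond> ?r1 \<diamond> ?r2) \<diamond> (?r2 \<diamond> ?r1)" using mx by simp
    also have "\<dots> = ?s2 \<diamond> (?r1 \<diamond> (?r2 \<diamond> (?r2 \<diamond> ?r1)))" using c by (simp add: G.m_assoc)
    also have "\<dots> = ?s2" using c rr1 rr2 rr[of i] assms by simp
    finally show ?thesis by simp
  qed
  have ts2: "ti ?s2 = ?r1 \<diamond> (?r2 \<diamond> (ti ?s1 \<diamond> (?r2 \<diamond> ?r1)))"
    using c assms by (subst s2) (simp add: G.inv_mult_group rinv G.m_assoc)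
  have "lambda n (i+1) (i+2) = ?r2 \<diamond> ti ?s2" using lam_adj[of "i+1"] assms by simp
  also have "\<dots> = ?r2 \<diamond> (?r1 \<diamond> (?r2 \<diamond> (ti ?s1 \<diamond> (?r2 \<diamond> ?r1))))" using ts2 by simp
  also have "\<dots> = ?r1 \<diamond> (?r2 \<diamond> (?r1 \<diamond> (ti ?s1 \<diamond> (?r2 \<diamond> ?r1))))" using c br' by simp
  also have "\<dots> = ?r1 \<diamond> ?r2 \<diamond> lambda n i (i+1) \<diamond> (?r2 \<diamond> ?r1)"
    using c assms lam_adj[of i] by (simp add: G.m_assoc)
  finally show ?thesis by simp
qed

lemma one_RhoSub: "ee \<in> RhoSub n"
  using subgroup.one_closed[OF RhoSub_sub] by simp

lemma E1: "1 \<le> i \<Longrightarrow> i \<le> n - 1 \<Longrightarrow>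
  \<exists>a\<in>RhoSub n. phiP n a 1 = i \<and> phiP n a 2 = i + 1 \<and> lambda n i (i+1) = ti a \<diamond> lambda n 1 2 \<diamond> a"
proof (induction i)
  case 0 then show ?case by simp
next
  case (Suc i)
  show ?case
  proof (cases "i = 0")
    case True
    have "lambda n 1 2 \<in> carrier (TVB n)" using lam_adj_car[of 1, unfolded one_add_one] Suc.prems True by simp
    then show ?thesis using True one_RhoSub by (intro bexI[of _ ee]) (auto simp: numeral_2_eq_2)
  next
    case False
    then obtain a where a: "a \<in> RhoSub n" "phiP n a 1 = i" "phiP n a 2 = i + 1"
      "lambda n i (i+1) = ti a \<diamond> lambda n 1 2 \<diamond> a" using Suc by auto
    let ?r1 = "rho n i" and ?r2 = "rho n (i+1)"
    have ac: "a \<in> carrier (TVB n)" using a RhoSub_car by auto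
    have c: "?r1 \<in> carrier (TVB n)" "?r2 \<in> carrier (TVB n)" "lambda n 1 2 \<in> carrier (TVB n)"
      using Suc.prems False lam_adj_car[of 1, unfolded one_add_one] by auto
    have m: "?r2 \<diamond> ?r1 \<in> RhoSub n" using rho_RhoSub RhoSub_mult Suc.prems False by auto
    have "ti (a \<diamond> (?r2 \<diamond> ?r1)) \<diamond> lambda n 1 2 \<diamond> (a \<diamond> (?r2 \<diamond> ?r1))
        = ti (?r2 \<diamond> ?r1) \<diamond> lambda n i (i+1) \<diamond> (?r2 \<diamond> ?r1)"
      using conj_mult[OF ac _ c(3), of "?r2 \<diamond> ?r1"] a c by simp
    also have "\<dots> = ?r1 \<diamond> ?r2 \<diamond> lambda n i (i+1) \<diamond> (?r2 \<diamond> ?r1)"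
      using c Suc.prems False by (simp add: G.inv_mult_group rinv)
    also have "\<dots> = lambda n (Suc i) (Suc i + 1)" using K[of i] Suc.prems False by simp
    finally have l: "lambda n (Suc i) (Suc i + 1) = ti (a \<diamond> (?r2 \<diamond> ?r1)) \<diamond> lambda n 1 2 \<diamond> (a \<diamond> (?r2 \<diamond> ?r1))" ..
    have p: "phiP n (a \<diamond> (?r2 \<diamond> ?r1)) = transpose i (i+1) \<circ> transpose (i+1) (i+2) \<circ> phiP n a"
      using ac c Suc.prems False by (simp add: phiP_rho comp_assoc)
    show ?thesis
      using a p l RhoSub_mult[OF a(1) m] by (intro bexI[of _ "a \<diamond> (?r2 \<diamond> ?r1)"]) (auto simp: transpose_def)
  qed
qed

end

context tvb begin

lemma lam12_car: "2 \<le> n \<Longrightarrow> lambda n 1 2 \<in> carrier (TVB n)"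
  using lam_adj_car[of 1, unfolded one_add_one] by simp

lemma E: assumes n2: "2 \<le> n" and ij: "1 \<le> i" "i \<le> n" "1 \<le> j" "j \<le> n" "i \<noteq> j"
  shows "\<exists>a\<in>RhoSub n. phiP n a 1 = i \<and> phiP n a 2 = j \<and> lambda n i j = ti a \<diamond> lambda n 1 2 \<diamond> a"
proof -
  have l12: "lambda n 1 2 \<in> carrier (TVB n)" using lam12_car n2 by simp
  have E2: "\<exists>a\<in>RhoSub n. phiP n a 1 = k + 1 \<and> phiP n a 2 = k \<and> lambda n (k+1) k = ti a \<diamond> lambda n 1 2 \<diamond> a"
    if k: "1 \<le> k" "k \<le> n - 1" for k
  proof -
    obtain a where a: "a \<in> RhoSub n" "phiP n a 1 = k" "phiP n a 2 = k + 1"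
      "lambda n k (k+1) = ti a \<diamond> lambda n 1 2 \<diamond> a" using E1 k by blast
    have ac: "a \<in> carrier (TVB n)" using a RhoSub_car by auto
    have rc: "rho n k \<in> carrier (TVB n)" using k by simp
    have "ti (a \<diamond> rho n k) \<diamond> lambda n 1 2 \<diamond> (a \<diamond> rho n k) = ti (rho n k) \<diamond> lambda n k (k+1) \<diamond> rho n k"
      using conj_mult[OF ac rc l12] a by simp
    also have "\<dots> = lambda n (k+1) k" using k lam_rev rinv by simp
    finally have l: "lambda n (k+1) k = ti (a \<diamond> rho n k) \<diamond> lambda n 1 2 \<diamond> (a \<diamond> rho n k)" ..
    have p: "phiP n (a \<diamond> rho n k) = transpose k (k+1) \<circ> phiP n a" using ac rc k by (simp add: phiP_rho)
    show ?thesis using a l p RhoSub_mult[OF a(1) rho_RhoSub[OF k]]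
      by (intro bexI[of _ "a \<diamond> rho n k"]) auto
  qed
  have far: "\<exists>a\<in>RhoSub n. phiP n a 1 = q \<and> phiP n a 2 = p \<and> lambda n q p = ti a \<diamond> lambda n 1 2 \<diamond> a"
    if pq: "\<exists>a\<in>RhoSub n. phiP n a 1 = q' \<and> phiP n a 2 = p' \<and> lambda n q' p' = ti a \<diamond> lambda n 1 2 \<diamond> a"
      "lambda n q p = ti (cls n (rws [m+1..<M])) \<diamond> lambda n q' p' \<diamond> cls n (rws [m+1..<M])"
      "1 \<le> m" "m + 1 < M" "M \<le> n"
      "(q' = m \<and> p' = m + 1 \<and> q = m \<and> p = M) \<or> (q' = m + 1 \<and> p' = m \<and> q = M \<and> p = m)"
    for q p q' p' m M
  proof -
    obtain a where a: "a \<in> RhoSub n" "phiP n a 1 = q'" "phiP n a 2 = p'"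
      "lambda n q' p' = ti a \<diamond> lambda n 1 2 \<diamond> a" using pq(1) by blast
    let ?R = "cls n (rws [m+1..<M])"
    have r: "\<forall>k\<in>set [m+1..<M]. 1 \<le> k \<and> k \<le> n - 1" using pq by auto
    have ac: "a \<in> carrier (TVB n)" using a RhoSub_car by auto
    have rc: "?R \<in> carrier (TVB n)" using rws_car[OF r] .
    have l: "lambda n q p = ti (a \<diamond> ?R) \<diamond> lambda n 1 2 \<diamond> (a \<diamond> ?R)"
      using conj_mult[OF ac rc l12] a pq(2) by simp
    have pr: "phiP n ?R (m+1) = M \<and> (\<forall>x<m+1. phiP n ?R x = x)"
      using phiw_rws_range[of "m+1" M] pq rws_words[OF r] by (simp add: phiP_cls)
    have p: "phiP n (a \<diamond> ?R) = phiP n ?R \<circ> phiP n a" using ac rc by simp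
    show ?thesis using a l p pr pq(6) RhoSub_mult[OF a(1) rws_RhoSub[OF r]]
      by (intro bexI[of _ "a \<diamond> ?R"]) auto
  qed
  consider "j = i + 1" | "i = j + 1" | "i + 1 < j" | "j + 1 < i" using ij by linarith
  then show ?thesis
  proof cases
    case 1 then show ?thesis using E1[of i] ij by auto
  next
    case 2 then show ?thesis using E2[of j] ij by auto
  next
    case 3
    show ?thesis
      by (rule far[of i "i+1" i j i j]) (use E1[of i] ij 3 lam_far1[of i j] in auto)
  next
    case 4
    show ?thesis
      by (rule far[of "j+1" j i j j i]) (use E2[of j] ij 4 lam_far2[of j i] in auto)
  qed
qed

lemma comm_L1: "x \<in> genR 3 n \<Longrightarrow> 2 \<le> n \<Longrightarrow> x \<diamond> lambda n 1 2 = lambda n 1 2 \<diamond> x"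
proof -
  assume x: "x \<in> genR 3 n" and n2: "2 \<le> n"
  have l12: "lambda n 1 2 \<in> carrier (TVB n)" using lam12_car n2 by simp
  have L: "lambda n 1 2 = rho n 1 \<diamond> ti (sigma n 1)" using lam_adj[of 1, unfolded one_add_one] n2 by simp
  have gen: "rho n k \<diamond> lambda n 1 2 = lambda n 1 2 \<diamond> rho n k" if k: "3 \<le> k" "k < n" for k
  proof -
    have c: "rho n 1 \<in> carrier (TVB n)" "sigma n 1 \<in> carrier (TVB n)" "rho n k \<in> carrier (TVB n)"
      using k n2 by auto
    have c1: "rho n 1 \<diamond> rho n k = rho n k \<diamond> rho n 1" using comm_r[of 1 k] k by auto
    have c2: "sigma n 1 \<diamond> rho n k = rho n k \<diamond> sigma n 1" using comm_sr[of 1 k] k by auto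
    have c3: "ti (sigma n 1) \<diamond> rho n k = rho n k \<diamond> ti (sigma n 1)" using G.comm_inv[OF c(2,3) c2] .
    show ?thesis unfolding L using G.comm_mult[OF c(1) _ c(3) c1 c3] c by simp
  qed
  show ?thesis using x unfolding genR_def
  proof (induction rule: generate.induct)
    case one then show ?case using l12 by simp
  next
    case (incl h) then show ?case using gen by auto
  next
    case (inv h)
    then obtain k where "h = rho n k" "3 \<le> k" "k < n" by auto
    then show ?case using gen rinv by auto
  next
    case (eng h1 h2)
    have c: "h1 \<in> carrier (TVB n)" "h2 \<in> carrier (TVB n)"
      using eng.hyps genR_car[of 3 n] unfolding genR_def by auto
    have "h1 \<diamond> h2 \<diamond> lambda n 1 2 = h1 \<diamond> (lambda n 1 2 \<diamond> h2)" using c l12 eng.IH by (simp add: G.m_assoc)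
    also have "\<dots> = lambda n 1 2 \<diamond> (h1 \<diamond> h2)" using c l12 eng.IH by (simp add: G.m_assoc[symmetric])
    finally show ?case .
  qed
qed

lemma stab: assumes n2: "2 \<le> n" and d: "d \<in> RhoSub n" "phiP n d 1 = 1" "phiP n d 2 = 2"
  shows "d \<diamond> lambda n 1 2 = lambda n 1 2 \<diamond> d"
proof -
  have dc: "d \<in> carrier (TVB n)" using d RhoSub_car by auto
  have pd: "phiP n d permutes {1..n}" using phiP_perm[OF dc] .
  have "phiP n d permutes {3..n}"
    unfolding permutes_def
  proof
    show "\<forall>x. x \<notin> {3..n} \<longrightarrow> phiP n d x = x"
    proof (intro allI impI)
      fix x assume "x \<notin> {3..n}"
      then have "x \<notin> {1..n} \<or> x = 1 \<or> x = 2" by auto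
      then show "phiP n d x = x" using pd d unfolding permutes_def by auto
    qed
    show "\<forall>y. \<exists>!x. phiP n d x = y" using pd unfolding permutes_def by blast
  qed
  then obtain e where e: "e \<in> genR 3 n" "phiP n e = phiP n d" using surj_gen[of 3 n] by auto
  have "genR 3 n \<subseteq> genR 1 n" unfolding genR_def by (rule G.mono_generate) auto
  then have "e \<in> RhoSub n" using e RhoSub_eq by auto
  then have "e = d" using inj_RhoSub e d unfolding inj_on_def by blast
  then show ?thesis using comm_L1 e n2 by auto
qed

lemma lambda_conj: assumes n2: "2 \<le> n" and b: "b \<in> RhoSub n"
  and ij: "1 \<le> i" "i \<le> n" "1 \<le> j" "j \<le> n" "i \<noteq> j"
  shows "ti b \<diamond> lambda n i j \<diamond> b = lambda n (phiP n b i) (phiP n b j)"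
proof -
  have bc: "b \<in> carrier (TVB n)" using b RhoSub_car by auto
  have l12: "lambda n 1 2 \<in> carrier (TVB n)" using lam12_car n2 by simp
  obtain a where a: "a \<in> RhoSub n" "phiP n a 1 = i" "phiP n a 2 = j" "lambda n i j = ti a \<diamond> lambda n 1 2 \<diamond> a"
    using E[OF n2 ij] by blast
  let ?i = "phiP n b i" and ?j = "phiP n b j"
  have rng: "1 \<le> ?i" "?i \<le> n" "1 \<le> ?j" "?j \<le> n" using perm_range[OF bc] ij by auto
  have neq: "?i \<noteq> ?j" using permutes_inj[OF phiP_perm[OF bc]] ij unfolding inj_def by blast
  obtain a' where a': "a' \<in> RhoSub n" "phiP n a' 1 = ?i" "phiP n a' 2 = ?j"
    "lambda n ?i ?j = ti a' \<diamond> lambda n 1 2 \<diamond> a'"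
    using E[OF n2 rng neq] by blast
  have ac: "a \<in> carrier (TVB n)" "a' \<in> carrier (TVB n)" using a a' RhoSub_car by auto
  define d where "d = a \<diamond> b \<diamond> ti a'"
  have dR: "d \<in> RhoSub n" unfolding d_def
    using RhoSub_mult[OF RhoSub_mult[OF a(1) b] subgroup.m_inv_closed[OF RhoSub_sub a'(1)]] .
  have dc: "d \<in> carrier (TVB n)" using dR RhoSub_car by auto
  have inva: "phiP n (ti a') (phiP n a' x) = x" for x
  proof -
    have "phiP n (a' \<diamond> ti a') = id" using ac by simp
    moreover have "phiP n (a' \<diamond> ti a') = phiP n (ti a') \<circ> phiP n a'"
      by (rule phiP_mult) (use ac in auto)
    ultimately show ?thesis by (metis comp_apply id_apply)
  qed
  have pd: "phiP n d x = phiP n (ti a') (phiP n b (phiP n a x))" for x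
    unfolding d_def using ac bc by simp
  have d1: "phiP n d 1 = 1" using pd[of 1] a a' inva[of 1] by simp
  have d2: "phiP n d 2 = 2" using pd[of 2] a a' inva[of 2] by simp
  have cm: "d \<diamond> lambda n 1 2 = lambda n 1 2 \<diamond> d" using stab[OF n2 dR d1 d2] .
  have ab: "a \<diamond> b = d \<diamond> a'" unfolding d_def using ac bc by (simp add: G.m_assoc)
  have "ti b \<diamond> lambda n i j \<diamond> b = ti (a \<diamond> b) \<diamond> lambda n 1 2 \<diamond> (a \<diamond> b)"
    using conj_mult[OF ac(1) bc l12] a(4) by simp
  also have "\<dots> = ti a' \<diamond> (ti d \<diamond> lambda n 1 2 \<diamond> d) \<diamond> a'"
    unfolding ab using conj_mult[OF dc ac(2) l12] .
  also have "ti d \<diamond> lambda n 1 2 \<diamond> d = lambda n 1 2"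
  proof -
    have "ti d \<diamond> lambda n 1 2 \<diamond> d = ti d \<diamond> (lambda n 1 2 \<diamond> d)" using dc l12 by (simp add: G.m_assoc)
    also have "\<dots> = ti d \<diamond> (d \<diamond> lambda n 1 2)" using cm by simp
    also have "\<dots> = lambda n 1 2" using dc l12 by (simp add: G.m_assoc[symmetric])
    finally show ?thesis .
  qed
  finally show ?thesis using a' by simp
qed

end
theorem mainTheorem3:
  fixes n :: nat
  assumes "n \<ge> 2"
  shows "group (TVB n)
    \<and> phiP n \<in> hom (TVB n) (Sym n)
    \<and> subgroup (RhoSub n) (TVB n)
    \<and> phiP n \<in> iso ((TVB n)\<lparr>carrier := RhoSub n\<rparr>) (Sym n)
    \<and> (\<forall>i. 1 \<le> i \<and> i \<le> n - 1 \<longrightarrow> phiP n (rho n i) = transpose i (i + 1))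
    \<and> TVP n \<lhd> TVB n
    \<and> TVP n \<inter> RhoSub n = {\<one>\<^bsub>TVB n\<^esub>}
    \<and> TVP n <#>\<^bsub>TVB n\<^esub> RhoSub n = carrier (TVB n)
    \<and> (\<forall>a \<in> RhoSub n.
         (\<forall>i j. 1 \<le> i \<and> i \<le> n \<and> 1 \<le> j \<and> j \<le> n \<and> i \<noteq> j \<longrightarrow>
            inv\<^bsub>TVB n\<^esub> a \<otimes>\<^bsub>TVB n\<^esub> lambda n i j \<otimes>\<^bsub>TVB n\<^esub> a
              = lambda n (phiP n a i) (phiP n a j))
       \<and> (\<forall>i. 1 \<le> i \<and> i \<le> n \<longrightarrow>
            inv\<^bsub>TVB n\<^esub> a \<otimes>\<^bsub>TVB n\<^esub> gamma n i \<otimes>\<^bsub>TVB n\<^esub> a = gamma n (phiP n a i)))"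
proof -
  interpret T: tvb n .
  have n2: "2 \<le> n" using assms .
  have hom: "phiP n \<in> hom ((TVB n)\<lparr>carrier := RhoSub n\<rparr>) (Sym n)"
    using T.RhoSub_car unfolding hom_def by (auto intro!: T.phiP_mult)
  have iso: "phiP n \<in> iso ((TVB n)\<lparr>carrier := RhoSub n\<rparr>) (Sym n)"
    unfolding iso_def using hom T.inj_RhoSub T.img_RhoSub by (simp add: bij_betw_def)
  have invid: "phiP n (inv\<^bsub>TVB n\<^esub> a) \<circ> phiP n a = id" if "a \<in> carrier (TVB n)" for a
  proof -
    have "phiP n (a \<otimes>\<^bsub>TVB n\<^esub> inv\<^bsub>TVB n\<^esub> a) = id" using that by simp
    moreover have "phiP n (a \<otimes>\<^bsub>TVB n\<^esub> inv\<^bsub>TVB n\<^esub> a) = phiP n (inv\<^bsub>TVB n\<^esub> a) \<circ> phiP n a"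
      by (rule T.phiP_mult) (use that in auto)
    ultimately show ?thesis by simp
  qed
  have inter: "TVP n \<inter> RhoSub n = {\<one>\<^bsub>TVB n\<^esub>}"
  proof
    show "TVP n \<inter> RhoSub n \<subseteq> {\<one>\<^bsub>TVB n\<^esub>}"
    proof
      fix x assume x: "x \<in> TVP n \<inter> RhoSub n"
      then have "phiP n x = phiP n \<one>\<^bsub>TVB n\<^esub>" by (simp add: TVP_def kernel_def)
      then have "x = \<one>\<^bsub>TVB n\<^esub>" using T.inj_RhoSub x T.one_RhoSub unfolding inj_on_def by blast
      then show "x \<in> {\<one>\<^bsub>TVB n\<^esub>}" by simp
    qed
    show "{\<one>\<^bsub>TVB n\<^esub>} \<subseteq> TVP n \<inter> RhoSub n"
      using T.one_RhoSub by (simp add: TVP_def kernel_def)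
  qed
  have prod: "TVP n <#>\<^bsub>TVB n\<^esub> RhoSub n = carrier (TVB n)"
  proof
    show "TVP n <#>\<^bsub>TVB n\<^esub> RhoSub n \<subseteq> carrier (TVB n)"
      using T.RhoSub_car unfolding set_mult_def TVP_def kernel_def by auto
    show "carrier (TVB n) \<subseteq> TVP n <#>\<^bsub>TVB n\<^esub> RhoSub n"
    proof
      fix g assume g: "g \<in> carrier (TVB n)"
      then have "phiP n g \<in> carrier (Sym n)" by simp
      then obtain a where a: "a \<in> RhoSub n" "phiP n a = phiP n g" using T.img_RhoSub by force
      have ac: "a \<in> carrier (TVB n)" using a T.RhoSub_car by auto
      have "phiP n (g \<otimes>\<^bsub>TVB n\<^esub> inv\<^bsub>TVB n\<^esub> a) = phiP n (inv\<^bsub>TVB n\<^esub> a) \<circ> phiP n a"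
        using g ac a by (subst T.phiP_mult) auto
      then have "phiP n (g \<otimes>\<^bsub>TVB n\<^esub> inv\<^bsub>TVB n\<^esub> a) = id" using invid[OF ac] by simp
      then have k: "g \<otimes>\<^bsub>TVB n\<^esub> inv\<^bsub>TVB n\<^esub> a \<in> TVP n" using g ac by (simp add: TVP_def kernel_def)
      have "g = (g \<otimes>\<^bsub>TVB n\<^esub> inv\<^bsub>TVB n\<^esub> a) \<otimes>\<^bsub>TVB n\<^esub> a" using g ac by (simp add: T.G.m_assoc)
      then show "g \<in> TVP n <#>\<^bsub>TVB n\<^esub> RhoSub n" unfolding set_mult_def using k a by blast
    qed
  qed
  show ?thesis
    using TVB_group[of n] phiP_hom[of n] T.RhoSub_sub iso T.phiP_rho inter prod
      T.H.normal_kernel T.gamma_conj T.lambda_conj[OF n2]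
    by (simp add: TVP_def)
qed

end
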